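(* Let $U$ be any consistent theory (of arbitrary complexity of its axiom set) in the language of arithmetic that extends Robinson's theory $\mathsf{R}$ (the Tarski–Mostowski–Robinson theory). Then there is no formula $\rho(x)$ satisfying both of the following: (Independence) for every sentence $\phi$, if $U+\phi$ is consistent, then both $U+\phi+\rho(\ulcorner\phi\urcorner)$ and $U+\phi+\neg\rho(\ulcorner\phi\urcorner)$ are consistent; (Extensionality) for all sentences $\phi,\psi$, if $U\vdash\phi\leftrightarrow\psi$, then $U\vdash\rho(\ulcorner\phi\urcorner)\leftrightarrow\rho(\ulcorner\psi\urcorner)$.
   Context: $\ulcorner\phi\urcorner$ denotes the numeral of the Gödel number of $\phi$. *)

theory Defs
  imports Main "HOL-Library.Nat_Bijection"
begin

datatype trm = Var nat | Zero | S trm | Plus trm trm | Times trm trm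

datatype fm = Eq trm trm | Bot | Imp fm fm | All fm
  \<comment> \<open>\<open>All \<phi>\<close> binds the de Bruijn index 0 in \<open>\<phi>\<close>\<close>

definition Neg :: "fm \<Rightarrow> fm" where "Neg \<phi> = Imp \<phi> Bot"
definition Or :: "fm \<Rightarrow> fm \<Rightarrow> fm" where "Or \<phi> \<psi> = Imp (Neg \<phi>) \<psi>"
definition And :: "fm \<Rightarrow> fm \<Rightarrow> fm" where "And \<phi> \<psi> = Neg (Imp \<phi> (Neg \<psi>))"
definition Iff :: "fm \<Rightarrow> fm \<Rightarrow> fm" where "Iff \<phi> \<psi> = And (Imp \<phi> \<psi>) (Imp \<psi> \<phi>)"
definition Ex :: "fm \<Rightarrow> fm" where "Ex \<phi> = Neg (All (Neg \<phi>))"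

primrec liftt :: "nat \<Rightarrow> trm \<Rightarrow> trm" where
  "liftt k (Var i) = (if i < k then Var i else Var (Suc i))"
| "liftt k Zero = Zero"
| "liftt k (S t) = S (liftt k t)"
| "liftt k (Plus s t) = Plus (liftt k s) (liftt k t)"
| "liftt k (Times s t) = Times (liftt k s) (liftt k t)"

primrec liftf :: "nat \<Rightarrow> fm \<Rightarrow> fm" where
  "liftf k (Eq s t) = Eq (liftt k s) (liftt k t)"
| "liftf k Bot = Bot"
| "liftf k (Imp \<phi> \<psi>) = Imp (liftf k \<phi>) (liftf k \<psi>)"
| "liftf k (All \<phi>) = All (liftf (Suc k) \<phi>)"

primrec substt :: "nat \<Rightarrow> trm \<Rightarrow> trm \<Rightarrow> trm" where
  "substt k u (Var i) = (if i < k then Var i else if i = k then u else Var (i - 1))"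
| "substt k u Zero = Zero"
| "substt k u (S t) = S (substt k u t)"
| "substt k u (Plus s t) = Plus (substt k u s) (substt k u t)"
| "substt k u (Times s t) = Times (substt k u s) (substt k u t)"

primrec substf :: "nat \<Rightarrow> trm \<Rightarrow> fm \<Rightarrow> fm" where
  "substf k u (Eq s t) = Eq (substt k u s) (substt k u t)"
| "substf k u Bot = Bot"
| "substf k u (Imp \<phi> \<psi>) = Imp (substf k u \<phi>) (substf k u \<psi>)"
| "substf k u (All \<phi>) = All (substf (Suc k) (liftt 0 u) \<phi>)"

primrec closedt :: "nat \<Rightarrow> trm \<Rightarrow> bool" where
  "closedt k (Var i) = (i < k)"
| "closedt k Zero = True"
| "closedt k (S t) = closedt k t"
| "closedt k (Plus s t) = (closedt k s \<and> closedt k t)"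
| "closedt k (Times s t) = (closedt k s \<and> closedt k t)"

primrec closedf :: "nat \<Rightarrow> fm \<Rightarrow> bool" where
  "closedf k (Eq s t) = (closedt k s \<and> closedt k t)"
| "closedf k Bot = True"
| "closedf k (Imp \<phi> \<psi>) = (closedf k \<phi> \<and> closedf k \<psi>)"
| "closedf k (All \<phi>) = closedf (Suc k) \<phi>"

definition sentence :: "fm \<Rightarrow> bool" where "sentence \<phi> = closedf 0 \<phi>"

primrec num :: "nat \<Rightarrow> trm" where
  "num 0 = Zero"
| "num (Suc n) = S (num n)"

primrec code_trm :: "trm \<Rightarrow> nat" where
  "code_trm (Var i) = prod_encode (0, i)"
| "code_trm Zero = prod_encode (1, 0)"
| "code_trm (S t) = prod_encode (2, code_trm t)"
| "code_trm (Plus s t) = prod_encode (3, prod_encode (code_trm s, code_trm t))"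
| "code_trm (Times s t) = prod_encode (4, prod_encode (code_trm s, code_trm t))"

primrec code_fm :: "fm \<Rightarrow> nat" where
  "code_fm (Eq s t) = prod_encode (0, prod_encode (code_trm s, code_trm t))"
| "code_fm Bot = prod_encode (1, 0)"
| "code_fm (Imp \<phi> \<psi>) = prod_encode (2, prod_encode (code_fm \<phi>, code_fm \<psi>))"
| "code_fm (All \<phi>) = prod_encode (3, code_fm \<phi>)"

definition quote :: "fm \<Rightarrow> trm" where "quote \<phi> = num (code_fm \<phi>)"

text \<open>For a formula \<open>\<rho>(x)\<close> whose only free variable is index 0: \<open>\<rho>(\<ulcorner>\<phi>\<urcorner>)\<close>.\<close>
definition inst :: "fm \<Rightarrow> fm \<Rightarrow> fm" where "inst \<rho> \<phi> = substf 0 (quote \<phi>) \<rho>"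

inductive prv :: "fm set \<Rightarrow> fm \<Rightarrow> bool" for T :: "fm set" where
  Ax: "\<phi> \<in> T \<Longrightarrow> prv T \<phi>"
| K: "prv T (Imp \<phi> (Imp \<psi> \<phi>))"
| Sd: "prv T (Imp (Imp \<phi> (Imp \<psi> \<chi>)) (Imp (Imp \<phi> \<psi>) (Imp \<phi> \<chi>)))"
| DN: "prv T (Imp (Neg (Neg \<phi>)) \<phi>)"
| AllE: "prv T (Imp (All \<phi>) (substf 0 t \<phi>))"
| AllI: "prv T (Imp (All (Imp (liftf 0 \<psi>) \<phi>)) (Imp \<psi> (All \<phi>)))"
| Refl: "prv T (Eq t t)"
| EqSub: "prv T (Imp (Eq s t) (Imp (substf 0 s \<phi>) (substf 0 t \<phi>)))"
| MP: "prv T (Imp \<phi> \<psi>) \<Longrightarrow> prv T \<phi> \<Longrightarrow> prv T \<psi>"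
| Gen: "prv T \<phi> \<Longrightarrow> prv T (All \<phi>)"

definition consistent :: "fm set \<Rightarrow> bool" where
  "consistent T = (\<not> prv T Bot)"

definition Le :: "trm \<Rightarrow> trm \<Rightarrow> fm" where
  "Le s t = Ex (Eq (Plus (Var 0) (liftt 0 s)) (liftt 0 t))"

definition BigOr :: "fm list \<Rightarrow> fm" where "BigOr xs = foldr Or xs Bot"

definition R_axioms :: "fm set" where
  "R_axioms =
     {Eq (Plus (num n) (num m)) (num (n + m)) | n m. True}
   \<union> {Eq (Times (num n) (num m)) (num (n * m)) | n m. True}
   \<union> {Neg (Eq (num n) (num m)) | n m. n \<noteq> m}
   \<union> {All (Imp (Le (Var 0) (num n)) (BigOr (map (\<lambda>i. Eq (Var 0) (num i)) [0..<Suc n]))) | n. True}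
   \<union> {All (Or (Le (Var 0) (num n)) (Le (num n) (Var 0))) | n. True}"

end

theory Submission
  imports Defs "HOL-Number_Theory.Cong"
begin


lemma liftt_closed: "closedt k t \<Longrightarrow> k \<le> j \<Longrightarrow> liftt j t = t"
  by (induction t) auto
lemma liftf_closed: "closedf k \<phi> \<Longrightarrow> k \<le> j \<Longrightarrow> liftf j \<phi> = \<phi>"
  by (induction \<phi> arbitrary: k j) (auto simp: liftt_closed)
lemma substt_closed: "closedt k t \<Longrightarrow> k \<le> j \<Longrightarrow> substt j u t = t"
  by (induction t) auto
lemma substf_closed: "closedf k \<phi> \<Longrightarrow> k \<le> j \<Longrightarrow> substf j u \<phi> = \<phi>"
  by (induction \<phi> arbitrary: k j u) (auto simp: substt_closed)

lemma closedt_mono: "closedt k t \<Longrightarrow> k \<le> j \<Longrightarrow> closedt j t"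
  by (induction t) auto
lemma closedf_mono: "closedf k \<phi> \<Longrightarrow> k \<le> j \<Longrightarrow> closedf j \<phi>"
  by (induction \<phi> arbitrary: k j) (auto intro: closedt_mono)

lemma closed_num[simp]: "closedt k (num n)"
  by (induction n) auto
lemma liftt_num[simp]: "liftt k (num n) = num n"
  by (rule liftt_closed[of 0]) auto
lemma substt_num[simp]: "substt k u (num n) = num n"
  by (rule substt_closed[of 0]) auto

lemma substt_liftt[simp]: "substt k u (liftt k t) = t"
  by (induction t) auto
lemma substf_liftf[simp]: "substf k u (liftf k \<phi>) = \<phi>"
  by (induction \<phi> arbitrary: k u) auto

lemma liftt_liftt: "i \<le> k \<Longrightarrow> liftt (Suc k) (liftt i t) = liftt i (liftt k t)"
  by (induction t) auto
lemma substt_liftt_comm: "substt (Suc k) (liftt 0 u) (liftt 0 t) = liftt 0 (substt k u t)"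
  by (induction t) auto

lemma closedt_liftt0[simp]: "closedt (Suc k) (liftt 0 t) = closedt k t"
  by (induction t) auto

lemma closedt_substt: "closedt (Suc n) t \<Longrightarrow> k \<le> n \<Longrightarrow> closedt n u \<Longrightarrow> closedt n (substt k u t)"
  by (induction t) auto
lemma closedf_substf: "closedf (Suc n) \<phi> \<Longrightarrow> k \<le> n \<Longrightarrow> closedt n u \<Longrightarrow> closedf n (substf k u \<phi>)"
  by (induction \<phi> arbitrary: n k u) (auto simp: closedt_substt)

lemma substt_var_id: "closedt (Suc k) t \<Longrightarrow> substt k (Var k) t = t"
  by (induction t) auto
lemma substf_var_id: "closedf (Suc k) \<phi> \<Longrightarrow> substf k (Var k) \<phi> = \<phi>"
  by (induction \<phi> arbitrary: k) (auto simp: substt_var_id)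

lemma substf_Neg[simp]: "substf k u (Neg \<phi>) = Neg (substf k u \<phi>)" by (simp add: Neg_def)
lemma substf_Or[simp]: "substf k u (Or \<phi> \<psi>) = Or (substf k u \<phi>) (substf k u \<psi>)" by (simp add: Or_def)
lemma substf_And[simp]: "substf k u (And \<phi> \<psi>) = And (substf k u \<phi>) (substf k u \<psi>)" by (simp add: And_def)
lemma substf_Iff[simp]: "substf k u (Iff \<phi> \<psi>) = Iff (substf k u \<phi>) (substf k u \<psi>)" by (simp add: Iff_def)
lemma substf_Ex[simp]: "substf k u (Ex \<phi>) = Ex (substf (Suc k) (liftt 0 u) \<phi>)" by (simp add: Ex_def)
lemma substf_Le[simp]: "substf k u (Le s t) = Le (substt k u s) (substt k u t)"
  by (simp add: Le_def substt_liftt_comm)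
lemma liftf_Neg[simp]: "liftf k (Neg \<phi>) = Neg (liftf k \<phi>)" by (simp add: Neg_def)
lemma closedf_Neg[simp]: "closedf k (Neg \<phi>) = closedf k \<phi>" by (simp add: Neg_def)
lemma closedf_Or[simp]: "closedf k (Or \<phi> \<psi>) = (closedf k \<phi> \<and> closedf k \<psi>)" by (simp add: Or_def)
lemma closedf_And[simp]: "closedf k (And \<phi> \<psi>) = (closedf k \<phi> \<and> closedf k \<psi>)" by (simp add: And_def)
lemma closedf_Iff[simp]: "closedf k (Iff \<phi> \<psi>) = (closedf k \<phi> \<and> closedf k \<psi>)" by (auto simp add: Iff_def)
lemma closedf_Ex[simp]: "closedf k (Ex \<phi>) = closedf (Suc k) \<phi>" by (simp add: Ex_def)
lemma closedf_Le[simp]: "closedf k (Le s t) = (closedt k s \<and> closedt k t)" by (simp add: Le_def)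

section \<open>Semantics\<close>

definition cons_env :: "nat \<Rightarrow> (nat \<Rightarrow> nat) \<Rightarrow> nat \<Rightarrow> nat" (infixr "##" 65) where
  "x ## e = (\<lambda>i. case i of 0 \<Rightarrow> x | Suc j \<Rightarrow> e j)"
lemma cons_env_simps[simp]: "(x ## e) 0 = x" "(x ## e) (Suc i) = e i"
  by (auto simp: cons_env_def)

primrec evalt :: "(nat \<Rightarrow> nat) \<Rightarrow> trm \<Rightarrow> nat" where
  "evalt e (Var i) = e i"
| "evalt e Zero = 0"
| "evalt e (S t) = Suc (evalt e t)"
| "evalt e (Plus s t) = evalt e s + evalt e t"
| "evalt e (Times s t) = evalt e s * evalt e t"

primrec evalf :: "(nat \<Rightarrow> nat) \<Rightarrow> fm \<Rightarrow> bool" where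
  "evalf e (Eq s t) = (evalt e s = evalt e t)"
| "evalf e Bot = False"
| "evalf e (Imp \<phi> \<psi>) = (evalf e \<phi> \<longrightarrow> evalf e \<psi>)"
| "evalf e (All \<phi>) = (\<forall>x. evalf (x ## e) \<phi>)"

definition shiftenv :: "nat \<Rightarrow> (nat \<Rightarrow> nat) \<Rightarrow> nat \<Rightarrow> nat" where
  "shiftenv k e = (\<lambda>i. if i < k then e i else e (Suc i))"
definition insenv :: "nat \<Rightarrow> nat \<Rightarrow> (nat \<Rightarrow> nat) \<Rightarrow> nat \<Rightarrow> nat" where
  "insenv k a e = (\<lambda>i. if i < k then e i else if i = k then a else e (i - 1))"

lemma evalt_liftt: "evalt e (liftt k t) = evalt (shiftenv k e) t"
  by (induction t) (auto simp: shiftenv_def)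
lemma shiftenv_cons: "shiftenv (Suc k) (x ## e) = x ## shiftenv k e"
  by (auto simp: shiftenv_def cons_env_def split: nat.splits)
lemma shiftenv0_cons[simp]: "shiftenv 0 (x ## e) = e"
  by (auto simp: shiftenv_def)
lemma evalt_liftt0[simp]: "evalt (x ## e) (liftt 0 t) = evalt e t"
  by (simp add: evalt_liftt)

lemma evalt_substt: "evalt e (substt k u t) = evalt (insenv k (evalt e u) e) t"
  by (induction t) (auto simp: insenv_def)
lemma insenv_cons: "insenv (Suc k) a (x ## e) = x ## insenv k a e"
  by (auto simp: insenv_def cons_env_def split: nat.splits)
lemma evalf_substf: "evalf e (substf k u \<phi>) = evalf (insenv k (evalt e u) e) \<phi>"
  by (induction \<phi> arbitrary: k u e) (auto simp: evalt_substt insenv_cons)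
lemma insenv0[simp]: "insenv 0 a e = a ## e"
  by (auto simp: insenv_def cons_env_def split: nat.splits)

lemma evalt_num[simp]: "evalt e (num n) = n"
  by (induction n) auto
lemma evalf_Neg[simp]: "evalf e (Neg \<phi>) = (\<not> evalf e \<phi>)" by (simp add: Neg_def)
lemma evalf_Or[simp]: "evalf e (Or \<phi> \<psi>) = (evalf e \<phi> \<or> evalf e \<psi>)" by (auto simp add: Or_def)
lemma evalf_And[simp]: "evalf e (And \<phi> \<psi>) = (evalf e \<phi> \<and> evalf e \<psi>)" by (auto simp add: And_def)
lemma evalf_Ex[simp]: "evalf e (Ex \<phi>) = (\<exists>x. evalf (x ## e) \<phi>)" by (auto simp add: Ex_def)
lemma evalf_Le[simp]: "evalf e (Le s t) = (evalt e s \<le> evalt e t)"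
  by (auto simp add: Le_def le_iff_add) (metis add.commute)

lemma evalt_closed: "closedt k t \<Longrightarrow> \<forall>i<k. e i = e' i \<Longrightarrow> evalt e t = evalt e' t"
  by (induction t) auto
lemma evalf_closed: "closedf k \<phi> \<Longrightarrow> \<forall>i<k. e i = e' i \<Longrightarrow> evalf e \<phi> = evalf e' \<phi>"
proof (induction \<phi> arbitrary: k e e')
  case (Eq s t) then show ?case using evalt_closed[of k _ e e'] by auto
next
  case (All \<phi>)
  have "\<And>x. evalf (x ## e) \<phi> = evalf (x ## e') \<phi>"
    using All by (intro All.IH[of "Suc k"]) (auto simp: less_Suc_eq_0_disj)
  then show ?case by simp
next
  case (Imp a b) show ?case using Imp.IH[OF _ Imp.prems(2)] Imp.prems(1) by simp
qed auto


section \<open>Propositional calculus\<close>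

inductive pprv :: "fm set \<Rightarrow> fm \<Rightarrow> bool" for G :: "fm set" where
  pAx: "\<phi> \<in> G \<Longrightarrow> pprv G \<phi>"
| pK: "pprv G (Imp \<phi> (Imp \<psi> \<phi>))"
| pS: "pprv G (Imp (Imp \<phi> (Imp \<psi> \<chi>)) (Imp (Imp \<phi> \<psi>) (Imp \<phi> \<chi>)))"
| pDN: "pprv G (Imp (Neg (Neg \<phi>)) \<phi>)"
| pMP: "pprv G (Imp \<phi> \<psi>) \<Longrightarrow> pprv G \<phi> \<Longrightarrow> pprv G \<psi>"

lemma pprv_mono: "pprv G \<phi> \<Longrightarrow> G \<subseteq> H \<Longrightarrow> pprv H \<phi>"
proof (induction rule: pprv.induct)
  case (pMP a b) then show ?case using pprv.pMP by blast
qed (auto intro: pprv.pAx pprv.pK pprv.pS pprv.pDN)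

lemma pI: "pprv G (Imp \<phi> \<phi>)"
  using pMP[OF pMP[OF pS pK] pK[where \<psi>=\<phi>]] .

lemma pded: "pprv (insert \<phi> G) \<psi> \<Longrightarrow> pprv G (Imp \<phi> \<psi>)"
proof (induction rule: pprv.induct)
  case (pAx \<chi>) then show ?case
  proof (cases "\<chi> = \<phi>")
    case True then show ?thesis using pI by simp
  next
    case False then have "\<chi> \<in> G" using pAx by simp
    then show ?thesis using pprv.pMP[OF pprv.pK pprv.pAx] by blast
  qed
next
  case (pMP a b) then show ?case using pprv.pMP[OF pprv.pMP[OF pprv.pS]] by blast
next
  case pK then show ?case using pprv.pMP[OF pprv.pK pprv.pK] by blast
next
  case pS then show ?case using pprv.pMP[OF pprv.pK pprv.pS] by blast
next
  case pDN then show ?case using pprv.pMP[OF pprv.pK pprv.pDN] by blast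
qed

lemma pexfalso: "pprv G Bot \<Longrightarrow> pprv G \<phi>"
proof -
  assume "pprv G Bot"
  then have "pprv G (Neg (Neg \<phi>))" unfolding Neg_def using pMP[OF pK] by blast
  then show ?thesis using pMP[OF pDN] by blast
qed

lemma pcases: "pprv (insert a G) \<phi> \<Longrightarrow> pprv (insert (Neg a) G) \<phi> \<Longrightarrow> pprv G \<phi>"
proof -
  assume 1: "pprv (insert a G) \<phi>" and 2: "pprv (insert (Neg a) G) \<phi>"
  have A: "pprv G (Imp a \<phi>)" "pprv G (Imp (Neg a) \<phi>)" using 1 2 pded by auto
  let ?H = "insert (Neg \<phi>) G"
  have "pprv (insert a ?H) (Imp a \<phi>)" using A(1) by (rule pprv_mono) auto
  moreover have "pprv (insert a ?H) a" by (rule pAx) simp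
  ultimately have "pprv (insert a ?H) \<phi>" by (rule pMP)
  moreover have "pprv (insert a ?H) (Imp \<phi> Bot)" by (rule pAx) (simp add: Neg_def)
  ultimately have "pprv (insert a ?H) Bot" using pMP by blast
  then have "pprv ?H (Neg a)" unfolding Neg_def by (rule pded)
  moreover have "pprv ?H (Imp (Neg a) \<phi>)" using A(2) by (rule pprv_mono) auto
  ultimately have "pprv ?H \<phi>" using pMP by blast
  moreover have "pprv ?H (Imp \<phi> Bot)" by (rule pAx) (simp add: Neg_def)
  ultimately have "pprv ?H Bot" using pMP by blast
  then have "pprv G (Neg (Neg \<phi>))" unfolding Neg_def by (rule pded)
  then show ?thesis using pMP[OF pDN] by blast
qed

primrec peval :: "(fm \<Rightarrow> bool) \<Rightarrow> fm \<Rightarrow> bool" where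
  "peval v (Eq s t) = v (Eq s t)"
| "peval v Bot = False"
| "peval v (Imp a b) = (peval v a \<longrightarrow> peval v b)"
| "peval v (All a) = v (All a)"

primrec atoms :: "fm \<Rightarrow> fm set" where
  "atoms (Eq s t) = {Eq s t}"
| "atoms Bot = {}"
| "atoms (Imp a b) = atoms a \<union> atoms b"
| "atoms (All a) = {All a}"

lemma finite_atoms: "finite (atoms \<phi>)" by (induction \<phi>) auto

definition lit :: "(fm \<Rightarrow> bool) \<Rightarrow> fm \<Rightarrow> fm" where
  "lit v a = (if v a then a else Neg a)"

lemma kalmar: "\<forall>a\<in>atoms \<phi>. lit v a \<in> G \<Longrightarrow> pprv G (if peval v \<phi> then \<phi> else Neg \<phi>)"
proof (induction \<phi>)
  case (Eq s t) then show ?case by (auto simp: lit_def intro: pAx)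
next
  case Bot then show ?case by (simp add: Neg_def pI)
next
  case (All a) then show ?case by (auto simp: lit_def intro: pAx)
next
  case (Imp a b)
  then have IA: "pprv G (if peval v a then a else Neg a)" and IB: "pprv G (if peval v b then b else Neg b)"
    by auto
  show ?case
  proof (cases "peval v a")
    case False
    then have "pprv G (Neg a)" using IA by simp
    then have "pprv (insert a G) (Imp a Bot)" unfolding Neg_def by (rule pprv_mono) auto
    moreover have "pprv (insert a G) a" by (rule pAx) simp
    ultimately have "pprv (insert a G) Bot" by (rule pMP)
    then have "pprv G (Imp a b)" by (rule pded[OF pexfalso])
    then show ?thesis using False by simp
  next
    case True
    note Ta = True
    show ?thesis
    proof (cases "peval v b")
      case True
      then have "pprv G b" using IB by simp
      then have "pprv G (Imp a b)" using pMP[OF pK] by blast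
      then show ?thesis using True by simp
    next
      case False
      let ?H = "insert (Imp a b) G"
      have "pprv ?H a" using IA Ta by (auto intro!: pprv_mono[of G a])
      moreover have "pprv ?H (Imp a b)" by (rule pAx) simp
      ultimately have "pprv ?H b" using pMP by blast
      moreover have "pprv ?H (Imp b Bot)" using IB False by (auto simp: Neg_def intro!: pprv_mono[of G "Imp b Bot"])
      ultimately have "pprv (insert (Imp a b) G) Bot" using pMP by blast
      then have "pprv G (Neg (Imp a b))" unfolding Neg_def by (rule pded)
      then show ?thesis using Ta False by simp
    qed
  qed
qed

lemma taut_elim:
  assumes "\<forall>v. peval v \<phi>" "finite A"
  shows "A \<subseteq> atoms \<phi> \<Longrightarrow> \<forall>a\<in>atoms \<phi> - A. lit v a \<in> G \<Longrightarrow> pprv G \<phi>"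
  using assms(2)
proof (induction A arbitrary: v G)
  case empty
  then show ?case using kalmar[of \<phi> v G] assms(1) by auto
next
  case (insert a A)
  have "pprv (insert a G) \<phi>"
  proof (rule insert.IH[of "v(a := True)" "insert a G"])
    show "A \<subseteq> atoms \<phi>" using insert.prems by auto
    show "\<forall>b\<in>atoms \<phi> - A. lit (v(a := True)) b \<in> insert a G"
    proof
      fix b assume "b \<in> atoms \<phi> - A"
      then show "lit (v(a := True)) b \<in> insert a G"
        using insert.prems(2) by (cases "b = a") (auto simp: lit_def)
    qed
  qed
  moreover have "pprv (insert (Neg a) G) \<phi>"
  proof (rule insert.IH[of "v(a := False)" "insert (Neg a) G"])
    show "A \<subseteq> atoms \<phi>" using insert.prems by auto
    show "\<forall>b\<in>atoms \<phi> - A. lit (v(a := False)) b \<in> insert (Neg a) G"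
    proof
      fix b assume "b \<in> atoms \<phi> - A"
      then show "lit (v(a := False)) b \<in> insert (Neg a) G"
        using insert.prems(2) by (cases "b = a") (auto simp: lit_def)
    qed
  qed
  ultimately show ?case by (rule pcases)
qed

lemma taut_pprv: "\<forall>v. peval v \<phi> \<Longrightarrow> pprv {} \<phi>"
  using taut_elim[of \<phi> "atoms \<phi>" "\<lambda>_. True" "{}"] finite_atoms by auto

lemma pprv_prv: "pprv G \<phi> \<Longrightarrow> \<forall>g\<in>G. prv T g \<Longrightarrow> prv T \<phi>"
proof (induction rule: pprv.induct)
  case (pMP a b) then show ?case using prv.MP by blast
qed (auto intro: prv.Ax prv.K prv.Sd prv.DN)

lemma taut: "\<forall>v. peval v \<phi> \<Longrightarrow> prv T \<phi>"
  using pprv_prv[OF taut_pprv] by blast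

lemma peval_simps[simp]:
  "peval v (Neg a) = (\<not> peval v a)"
  "peval v (Or a b) = (peval v a \<or> peval v b)"
  "peval v (And a b) = (peval v a \<and> peval v b)"
  "peval v (Iff a b) = (peval v a \<longleftrightarrow> peval v b)"
  by (auto simp: Neg_def Or_def And_def Iff_def)

lemma prv_mono: "prv T \<phi> \<Longrightarrow> T \<subseteq> T' \<Longrightarrow> prv T' \<phi>"
proof (induction rule: prv.induct)
  case (MP a b) then show ?case using prv.MP by blast
next
  case (Gen a) then show ?case using prv.Gen by blast
qed (auto intro: prv.Ax prv.K prv.Sd prv.DN prv.AllE prv.AllI prv.Refl prv.EqSub)

lemma MP2: "prv T (Imp a (Imp b c)) \<Longrightarrow> prv T a \<Longrightarrow> prv T b \<Longrightarrow> prv T c"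
  by (rule prv.MP[OF prv.MP])
lemma MP3: "prv T (Imp a (Imp b (Imp c d))) \<Longrightarrow> prv T a \<Longrightarrow> prv T b \<Longrightarrow> prv T c \<Longrightarrow> prv T d"
  by (rule prv.MP[OF prv.MP[OF prv.MP]])

lemma tautMP: "\<forall>v. peval v (Imp a b) \<Longrightarrow> prv T a \<Longrightarrow> prv T b"
  by (rule prv.MP[OF taut])
lemma tautMP2: "\<forall>v. peval v (Imp a (Imp b c)) \<Longrightarrow> prv T a \<Longrightarrow> prv T b \<Longrightarrow> prv T c"
  by (rule MP2[OF taut])
lemma tautMP3: "\<forall>v. peval v (Imp a (Imp b (Imp c d))) \<Longrightarrow> prv T a \<Longrightarrow> prv T b \<Longrightarrow> prv T c \<Longrightarrow> prv T d"
  by (rule MP3[OF taut])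
lemma tautMP4: "\<forall>v. peval v (Imp a (Imp b (Imp c (Imp d f)))) \<Longrightarrow> prv T a \<Longrightarrow> prv T b \<Longrightarrow> prv T c \<Longrightarrow> prv T d \<Longrightarrow> prv T f"
  by (rule prv.MP[OF MP3[OF taut]])

lemma tMP: "prv T a \<Longrightarrow> \<forall>v. peval v (Imp a b) \<Longrightarrow> prv T b"
  by (rule prv.MP[OF taut])
lemma tMP2: "prv T a \<Longrightarrow> prv T b \<Longrightarrow> \<forall>v. peval v (Imp a (Imp b c)) \<Longrightarrow> prv T c"
  by (rule MP2[OF taut])
lemma tMP3: "prv T a \<Longrightarrow> prv T b \<Longrightarrow> prv T c \<Longrightarrow> \<forall>v. peval v (Imp a (Imp b (Imp c d))) \<Longrightarrow> prv T d"
  by (rule MP3[OF taut])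
lemma tMP4: "prv T a \<Longrightarrow> prv T b \<Longrightarrow> prv T c \<Longrightarrow> prv T d \<Longrightarrow> \<forall>v. peval v (Imp a (Imp b (Imp c (Imp d f)))) \<Longrightarrow> prv T f"
  by (rule prv.MP[OF MP3[OF taut]])

lemma imp_trans: "prv T (Imp a b) \<Longrightarrow> prv T (Imp b c) \<Longrightarrow> prv T (Imp a c)"
  by (rule tautMP2[of "Imp a b" "Imp b c"]) auto

lemma ded: "prv (insert \<phi> T) \<psi> \<Longrightarrow> closedf 0 \<phi> \<Longrightarrow> prv T (Imp \<phi> \<psi>)"
proof (induction rule: prv.induct)
  case (Ax \<chi>) then show ?case
  proof (cases "\<chi> = \<phi>")
    case True then show ?thesis using taut[of "Imp \<phi> \<phi>"] by simp
  next
    case False then have "\<chi> \<in> T" using Ax by simp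
    then show ?thesis using prv.MP[OF prv.K prv.Ax] by blast
  qed
next
  case (MP a b) then show ?case using prv.MP[OF prv.MP[OF prv.Sd]] by blast
next
  case (Gen a)
  have "prv T (Imp \<phi> a)" using Gen by simp
  then have "prv T (All (Imp \<phi> a))" by (rule prv.Gen)
  moreover have "prv T (Imp (All (Imp (liftf 0 \<phi>) a)) (Imp \<phi> (All a)))" by (rule prv.AllI)
  moreover have "liftf 0 \<phi> = \<phi>" using liftf_closed[OF Gen.prems, of 0] by simp
  ultimately show ?case using prv.MP by auto
next
  case K then show ?case using prv.MP[OF prv.K prv.K] by blast
next
  case Sd then show ?case using prv.MP[OF prv.K prv.Sd] by blast
next
  case DN then show ?case using prv.MP[OF prv.K prv.DN] by blast
next
  case AllE then show ?case using prv.MP[OF prv.K prv.AllE] by blast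
next
  case AllI then show ?case using prv.MP[OF prv.K prv.AllI] by blast
next
  case Refl then show ?case using prv.MP[OF prv.K prv.Refl] by blast
next
  case EqSub then show ?case using prv.MP[OF prv.K prv.EqSub] by blast
qed

lemma Neg_of_inconsistent: "\<not> consistent (insert \<phi> T) \<Longrightarrow> closedf 0 \<phi> \<Longrightarrow> prv T (Neg \<phi>)"
  unfolding Neg_def by (rule ded) (auto simp: consistent_def)

lemma AllE_var: "prv T (All \<phi>) \<Longrightarrow> closedf 1 \<phi> \<Longrightarrow> prv T \<phi>"
  using prv.MP[OF prv.AllE[of T \<phi> "Var 0"]] substf_var_id[of 0 \<phi>] by simp

lemma AllE': "prv T (All \<phi>) \<Longrightarrow> prv T (substf 0 t \<phi>)"
  using prv.MP[OF prv.AllE] .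

lemma ExI: "prv T (Imp (substf 0 t \<phi>) (Ex \<phi>))"
proof -
  have "prv T (Imp (All (Neg \<phi>)) (Neg (substf 0 t \<phi>)))" using prv.AllE[of T "Neg \<phi>" t] by simp
  then show ?thesis unfolding Ex_def by (rule tMP) auto
qed

lemma ExI': "prv T (substf 0 t \<phi>) \<Longrightarrow> prv T (Ex \<phi>)"
  using prv.MP[OF ExI] .

lemma AllI': "prv T (Imp (liftf 0 \<psi>) \<phi>) \<Longrightarrow> prv T (Imp \<psi> (All \<phi>))"
  using prv.MP[OF prv.AllI prv.Gen] .

lemma AllI_closed: "prv T (Imp \<psi> \<phi>) \<Longrightarrow> closedf 0 \<psi> \<Longrightarrow> prv T (Imp \<psi> (All \<phi>))"
  using AllI'[of T \<psi> \<phi>] liftf_closed[of 0 \<psi> 0] by simp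

lemma ExE': "prv T (Imp \<phi> (liftf 0 \<chi>)) \<Longrightarrow> prv T (Imp (Ex \<phi>) \<chi>)"
proof -
  assume "prv T (Imp \<phi> (liftf 0 \<chi>))"
  then have "prv T (Imp (liftf 0 (Neg \<chi>)) (Neg \<phi>))" by (rule tMP) auto
  then have "prv T (Imp (Neg \<chi>) (All (Neg \<phi>)))" by (rule AllI')
  then show ?thesis unfolding Ex_def by (rule tMP) auto
qed

lemma ExE_closed: "prv T (Imp \<phi> \<chi>) \<Longrightarrow> closedf 0 \<chi> \<Longrightarrow> prv T (Imp (Ex \<phi>) \<chi>)"
  using ExE'[of T \<phi> \<chi>] liftf_closed[of 0 \<chi> 0] by simp

lemma eq_sym: "prv T (Imp (Eq s t) (Eq t s))"
proof -
  have "prv T (Imp (Eq s t) (Imp (substf 0 s (Eq (Var 0) (liftt 0 s))) (substf 0 t (Eq (Var 0) (liftt 0 s)))))"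
    by (rule prv.EqSub)
  then have "prv T (Imp (Eq s t) (Imp (Eq s s) (Eq t s)))" by simp
  then show ?thesis by (rule tMP2[OF _ prv.Refl]) auto
qed

lemma eq_sym': "prv T (Eq s t) \<Longrightarrow> prv T (Eq t s)"
  using prv.MP[OF eq_sym] .

lemma eq_trans: "prv T (Imp (Eq r s) (Imp (Eq s t) (Eq r t)))"
proof -
  have "prv T (Imp (Eq s t) (Imp (substf 0 s (Eq (liftt 0 r) (Var 0))) (substf 0 t (Eq (liftt 0 r) (Var 0)))))"
    by (rule prv.EqSub)
  then have "prv T (Imp (Eq s t) (Imp (Eq r s) (Eq r t)))" by simp
  then show ?thesis by (rule tMP) auto
qed

lemma eq_trans': "prv T (Eq r s) \<Longrightarrow> prv T (Eq s t) \<Longrightarrow> prv T (Eq r t)"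
  using MP2[OF eq_trans] .

lemma eq_S: "prv T (Eq s t) \<Longrightarrow> prv T (Eq (S s) (S t))"
proof -
  assume a: "prv T (Eq s t)"
  have "prv T (Imp (Eq s t) (Imp (substf 0 s (Eq (S (liftt 0 s)) (S (Var 0)))) (substf 0 t (Eq (S (liftt 0 s)) (S (Var 0))))))"
    by (rule prv.EqSub)
  then have "prv T (Imp (Eq s t) (Imp (Eq (S s) (S s)) (Eq (S s) (S t))))" by simp
  then show ?thesis using MP2[OF _ a prv.Refl] by blast
qed

lemma eq_Plus: "prv T (Eq s t) \<Longrightarrow> prv T (Eq s' t') \<Longrightarrow> prv T (Eq (Plus s s') (Plus t t'))"
proof -
  assume a: "prv T (Eq s t)" and b: "prv T (Eq s' t')"
  have "prv T (Imp (Eq s t) (Imp (substf 0 s (Eq (Plus (liftt 0 s) (liftt 0 s')) (Plus (Var 0) (liftt 0 s')))) (substf 0 t (Eq (Plus (liftt 0 s) (liftt 0 s')) (Plus (Var 0) (liftt 0 s'))))))"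
    by (rule prv.EqSub)
  then have 1: "prv T (Eq (Plus s s') (Plus t s'))" using MP2[OF _ a prv.Refl] by simp
  have "prv T (Imp (Eq s' t') (Imp (substf 0 s' (Eq (Plus (liftt 0 s) (liftt 0 s')) (Plus (liftt 0 t) (Var 0)))) (substf 0 t' (Eq (Plus (liftt 0 s) (liftt 0 s')) (Plus (liftt 0 t) (Var 0))))))"
    by (rule prv.EqSub)
  then have "prv T (Imp (Eq (Plus s s') (Plus t s')) (Eq (Plus s s') (Plus t t')))" using prv.MP[OF _ b] by simp
  then show ?thesis using prv.MP[OF _ 1] by blast
qed

lemma eq_Times: "prv T (Eq s t) \<Longrightarrow> prv T (Eq s' t') \<Longrightarrow> prv T (Eq (Times s s') (Times t t'))"
proof -
  assume a: "prv T (Eq s t)" and b: "prv T (Eq s' t')"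
  have "prv T (Imp (Eq s t) (Imp (substf 0 s (Eq (Times (liftt 0 s) (liftt 0 s')) (Times (Var 0) (liftt 0 s')))) (substf 0 t (Eq (Times (liftt 0 s) (liftt 0 s')) (Times (Var 0) (liftt 0 s'))))))"
    by (rule prv.EqSub)
  then have 1: "prv T (Eq (Times s s') (Times t s'))" using MP2[OF _ a prv.Refl] by simp
  have "prv T (Imp (Eq s' t') (Imp (substf 0 s' (Eq (Times (liftt 0 s) (liftt 0 s')) (Times (liftt 0 t) (Var 0)))) (substf 0 t' (Eq (Times (liftt 0 s) (liftt 0 s')) (Times (liftt 0 t) (Var 0))))))"
    by (rule prv.EqSub)
  then have "prv T (Imp (Eq (Times s s') (Times t s')) (Eq (Times s s') (Times t t')))" using prv.MP[OF _ b] by simp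
  then show ?thesis using prv.MP[OF _ 1] by blast
qed


section \<open>Robinson arithmetic: basic facts\<close>

lemma closedf_BigOr[simp]: "closedf k (BigOr xs) = (\<forall>x\<in>set xs. closedf k x)"
  by (induction xs) (auto simp: BigOr_def)

lemma BigOr_elim: "(\<forall>x\<in>set xs. prv T (Imp x \<psi>)) \<Longrightarrow> prv T (Imp (BigOr xs) \<psi>)"
proof (induction xs)
  case Nil then show ?case by (simp add: BigOr_def taut)
next
  case (Cons a xs)
  then have 1: "prv T (Imp a \<psi>)" and 2: "prv T (Imp (BigOr xs) \<psi>)" by auto
  have "BigOr (a # xs) = Or a (BigOr xs)" by (simp add: BigOr_def)
  then show ?case by (simp only:) (rule tMP2[OF 1 2], auto)
qed

lemma evalf_BigOr[simp]: "evalf e (BigOr xs) = (\<exists>x\<in>set xs. evalf e x)"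
  by (induction xs) (auto simp: BigOr_def)

definition BAll :: "trm \<Rightarrow> fm \<Rightarrow> fm" where
  "BAll t \<phi> = All (Imp (Le (Var 0) (liftt 0 t)) \<phi>)"

lemma substf_BAll[simp]: "substf k u (BAll t \<phi>) = BAll (substt k u t) (substf (Suc k) (liftt 0 u) \<phi>)"
  by (simp add: BAll_def substt_liftt_comm)
lemma closedf_BAll[simp]: "closedf k (BAll t \<phi>) = (closedt k t \<and> closedf (Suc k) \<phi>)"
  by (simp add: BAll_def)
lemma evalf_BAll[simp]: "evalf e (BAll t \<phi>) = (\<forall>x\<le>evalt e t. evalf (x ## e) \<phi>)"
  by (auto simp: BAll_def)

locale Rth =
  fixes T :: "fm set"
  assumes Rax: "\<forall>\<psi>\<in>R_axioms. prv T \<psi>"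
begin

lemma ax_plus: "prv T (Eq (Plus (num n) (num m)) (num (n + m)))"
  using Rax unfolding R_axioms_def by blast
lemma ax_times: "prv T (Eq (Times (num n) (num m)) (num (n * m)))"
  using Rax unfolding R_axioms_def by blast
lemma ax_neq: "n \<noteq> m \<Longrightarrow> prv T (Neg (Eq (num n) (num m)))"
  using Rax unfolding R_axioms_def by blast
lemma ax_le: "prv T (All (Imp (Le (Var 0) (num n)) (BigOr (map (\<lambda>i. Eq (Var 0) (num i)) [0..<Suc n]))))"
  using Rax unfolding R_axioms_def by blast
lemma ax_tri: "prv T (All (Or (Le (Var 0) (num n)) (Le (num n) (Var 0))))"
  using Rax unfolding R_axioms_def by blast

lemma closed_term: "closedt 0 t \<Longrightarrow> prv T (Eq t (num (evalt e t)))"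
proof (induction t)
  case Zero then show ?case by (simp add: prv.Refl)
next
  case (S t) then show ?case using eq_S by simp
next
  case (Plus s t) then show ?case using eq_Plus ax_plus eq_trans' by fastforce
next
  case (Times s t) then show ?case using eq_Times ax_times eq_trans' by fastforce
qed auto

lemma le_num: "i \<le> n \<Longrightarrow> prv T (Le (num i) (num n))"
proof -
  assume "i \<le> n"
  have "prv T (Eq (Plus (num (n - i)) (num i)) (num n))" using ax_plus[of "n-i" i] \<open>i \<le> n\<close> by simp
  then have "prv T (substf 0 (num (n - i)) (Eq (Plus (Var 0) (num i)) (num n)))" by simp
  then have "prv T (Ex (Eq (Plus (Var 0) (num i)) (num n)))" by (rule ExI')
  then show ?thesis unfolding Le_def by simp
qed

lemma le_subst_right: "prv T (Imp (Eq s t) (Imp (Le (Var 0) s) (Le (Var 0) t)))"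
  using prv.EqSub[of T s t "Le (Var 1) (Var 0)"] by simp

lemma le_subst_right': "prv T (Imp (Eq s t) (Imp (Le r s) (Le r t)))"
  using prv.EqSub[of T s t "Le (liftt 0 r) (Var 0)"] by simp

lemma eq_var_subst: "closedf 1 \<phi> \<Longrightarrow> prv T (Imp (Eq (Var 0) t) (Imp (substf 0 t \<phi>) \<phi>))"
proof -
  assume c: "closedf 1 \<phi>"
  have "prv T (Imp (Eq t (Var 0)) (Imp (substf 0 t \<phi>) (substf 0 (Var 0) \<phi>)))" by (rule prv.EqSub)
  then have "prv T (Imp (Eq t (Var 0)) (Imp (substf 0 t \<phi>) \<phi>))" using substf_var_id[of 0 \<phi>] c by simp
  then show ?thesis by (rule tMP2[OF _ eq_sym[of T "Var 0" t]]) auto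
qed

end

inductive delta0 :: "fm \<Rightarrow> bool" where
  d_Eq: "delta0 (Eq s t)"
| d_Bot: "delta0 Bot"
| d_Imp: "delta0 a \<Longrightarrow> delta0 b \<Longrightarrow> delta0 (Imp a b)"
| d_BAll: "delta0 \<phi> \<Longrightarrow> delta0 (BAll t \<phi>)"

lemma delta0_substf: "delta0 \<phi> \<Longrightarrow> delta0 (substf k u \<phi>)"
  by (induction arbitrary: k u rule: delta0.induct) (auto intro: delta0.intros)

lemma delta0_Neg[intro]: "delta0 a \<Longrightarrow> delta0 (Neg a)" by (auto simp: Neg_def intro: delta0.intros)
lemma delta0_Or[intro]: "delta0 a \<Longrightarrow> delta0 b \<Longrightarrow> delta0 (Or a b)" by (auto simp: Or_def intro: delta0.intros)
lemma delta0_And[intro]: "delta0 a \<Longrightarrow> delta0 b \<Longrightarrow> delta0 (And a b)" by (auto simp: And_def intro: delta0.intros)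

primrec fsize :: "fm \<Rightarrow> nat" where
  "fsize (Eq s t) = 1"
| "fsize Bot = 1"
| "fsize (Imp a b) = Suc (fsize a + fsize b)"
| "fsize (All a) = Suc (fsize a)"

lemma fsize_substf[simp]: "fsize (substf k u \<phi>) = fsize \<phi>"
  by (induction \<phi> arbitrary: k u) auto

lemma fsize_pos: "fsize \<phi> > 0" by (cases \<phi>) auto

context Rth begin

lemma delta0_complete:
  "delta0 \<phi> \<Longrightarrow> closedf 0 \<phi> \<Longrightarrow> (evalf e \<phi> \<longrightarrow> prv T \<phi>) \<and> (\<not> evalf e \<phi> \<longrightarrow> prv T (Neg \<phi>))"
proof (induction "fsize \<phi>" arbitrary: \<phi> e rule: less_induct)
  case less
  from less.prems(1) show ?case
  proof (cases rule: delta0.cases)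
    case (d_Eq s t)
    have cs: "closedt 0 s" "closedt 0 t" using less.prems d_Eq by auto
    have 1: "prv T (Eq s (num (evalt e s)))" "prv T (Eq t (num (evalt e t)))"
      using closed_term cs by auto
    show ?thesis
    proof (cases "evalt e s = evalt e t")
      case True
      then have "prv T (Eq s t)" using eq_trans'[OF 1(1)[unfolded True] eq_sym'[OF 1(2)]] by simp
      then show ?thesis using d_Eq True by simp
    next
      case False
      have "prv T (Neg (Eq (num (evalt e s)) (num (evalt e t))))" using ax_neq False by auto
      moreover have "prv T (Imp (Eq s t) (Eq (num (evalt e s)) (num (evalt e t))))"
      proof -
        have h1: "prv T (Imp (Eq s t) (Eq (num (evalt e s)) t))"
          using prv.MP[OF eq_trans eq_sym'[OF 1(1)]] .
        have h2: "prv T (Imp (Eq (num (evalt e s)) t) (Eq (num (evalt e s)) (num (evalt e t))))"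
          by (rule tMP2[OF eq_trans[of T "num (evalt e s)" t "num (evalt e t)"] 1(2)]) auto
        show ?thesis using imp_trans[OF h1 h2] .
      qed
      ultimately have "prv T (Neg (Eq s t))" by (rule tMP2) auto
      then show ?thesis using False d_Eq by simp
    qed
  next
    case d_Bot then show ?thesis by (simp add: Neg_def taut)
  next
    case (d_Imp a b)
    have ca: "closedf 0 a" "closedf 0 b" using less.prems d_Imp by auto
    have IA: "(evalf e a \<longrightarrow> prv T a) \<and> (\<not> evalf e a \<longrightarrow> prv T (Neg a))"
      using less.hyps[of a e] d_Imp ca by auto
    have IB: "(evalf e b \<longrightarrow> prv T b) \<and> (\<not> evalf e b \<longrightarrow> prv T (Neg b))"
      using less.hyps[of b e] d_Imp ca by auto
    show ?thesis
    proof (cases "evalf e a")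
      case False
      then have na: "prv T (Neg a)" using IA by auto
      have "prv T (Imp a b)" by (rule tMP[OF na]) auto
      then show ?thesis using False d_Imp by simp
    next
      case True note ta = True
      show ?thesis
      proof (cases "evalf e b")
        case True
        then have pb: "prv T b" using IB by auto
        have "prv T (Imp a b)" by (rule tMP[OF pb]) auto
        then show ?thesis using True d_Imp by simp
      next
        case False
        have pa: "prv T a" and nb: "prv T (Neg b)" using IA IB ta False by auto
        have "prv T (Neg (Imp a b))" by (rule tMP2[OF pa nb]) auto
        then show ?thesis using False ta d_Imp by simp
      qed
    qed
  next
    case (d_BAll \<psi> t)
    have ct: "closedt 0 t" and cp: "closedf 1 \<psi>" using less.prems d_BAll by auto
    define n where "n = evalt e t"
    have tn: "prv T (Eq t (num n))" using closed_term ct n_def by auto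
    have IH: "\<And>i. (evalf (i ## e) \<psi> \<longrightarrow> prv T (substf 0 (num i) \<psi>)) \<and>
                   (\<not> evalf (i ## e) \<psi> \<longrightarrow> prv T (Neg (substf 0 (num i) \<psi>)))"
    proof -
      fix i
      have "fsize (substf 0 (num i) \<psi>) < fsize \<phi>" using d_BAll by (simp add: BAll_def)
      moreover have "delta0 (substf 0 (num i) \<psi>)" using d_BAll delta0_substf by auto
      moreover have "closedf 0 (substf 0 (num i) \<psi>)" using cp closedf_substf[of 0 \<psi> 0 "num i"] by simp
      ultimately show "?thesis i" using less.hyps[of "substf 0 (num i) \<psi>" e] by (simp add: evalf_substf)
    qed
    show ?thesis
    proof (cases "evalf e \<phi>")
      case True
      then have ev: "\<forall>i\<le>n. evalf (i ## e) \<psi>" using d_BAll n_def by simp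
      have "prv T (Imp (Le (Var 0) t) (Le (Var 0) (num n)))" using prv.MP[OF le_subst_right tn] .
      moreover have "prv T (Imp (Le (Var 0) (num n)) (BigOr (map (\<lambda>i. Eq (Var 0) (num i)) [0..<Suc n])))"
        by (rule AllE_var[OF ax_le]) simp
      moreover have "prv T (Imp (BigOr (map (\<lambda>i. Eq (Var 0) (num i)) [0..<Suc n])) \<psi>)"
      proof (rule BigOr_elim, safe)
        fix x assume "x \<in> set (map (\<lambda>i. Eq (Var 0) (num i)) [0..<Suc n])"
        then obtain i where i: "i \<le> n" "x = Eq (Var 0) (num i)" by (force simp del: upt_Suc simp add: less_Suc_eq_le)
        have "prv T (substf 0 (num i) \<psi>)" using IH ev i by auto
        then show "prv T (Imp x \<psi>)" unfolding i(2)
          by (rule tMP2[OF eq_var_subst[OF cp, of "num i"]]) auto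
      qed
      ultimately have "prv T (Imp (Le (Var 0) t) \<psi>)" by (meson imp_trans)
      then have "prv T (BAll t \<psi>)" unfolding BAll_def using liftt_closed[OF ct, of 0] by (simp add: prv.Gen)
      then show ?thesis using True d_BAll by simp
    next
      case False
      then obtain i where i: "i \<le> n" "\<not> evalf (i ## e) \<psi>" using d_BAll n_def by auto
      have 1: "prv T (Neg (substf 0 (num i) \<psi>))" using IH i by auto
      have "prv T (Le (num i) t)"
        using MP2[OF le_subst_right'[of "num n" t "num i"] eq_sym'[OF tn] le_num[OF i(1)]] .
      moreover have "prv T (Imp (BAll t \<psi>) (Imp (Le (num i) t) (substf 0 (num i) \<psi>)))"
        using prv.AllE[of T "Imp (Le (Var 0) (liftt 0 t)) \<psi>" "num i"] by (simp add: BAll_def)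
      ultimately have "prv T (Neg (BAll t \<psi>))"
        by (rule tMP3[OF _ _ 1]) auto
      then show ?thesis using False d_BAll by auto
    qed
  qed
qed

lemma delta0_true: "delta0 \<phi> \<Longrightarrow> closedf 0 \<phi> \<Longrightarrow> evalf e \<phi> \<Longrightarrow> prv T \<phi>"
  using delta0_complete by blast
lemma delta0_false: "delta0 \<phi> \<Longrightarrow> closedf 0 \<phi> \<Longrightarrow> \<not> evalf e \<phi> \<Longrightarrow> prv T (Neg \<phi>)"
  using delta0_complete by blast

end


section \<open>Arithmetization of the diagonal function\<close>

lemma cons_env_numeral[simp]: "(x ## e) (numeral n) = e (pred_numeral n)"
  by (simp add: numeral_eq_Suc)

definition BEx :: "trm \<Rightarrow> fm \<Rightarrow> fm" where
  "BEx t \<phi> = Neg (BAll t (Neg \<phi>))"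

lemma evalf_BEx[simp]: "evalf e (BEx t \<phi>) = (\<exists>x\<le>evalt e t. evalf (x ## e) \<phi>)"
  by (auto simp: BEx_def)
lemma substf_BEx[simp]: "substf k u (BEx t \<phi>) = BEx (substt k u t) (substf (Suc k) (liftt 0 u) \<phi>)"
  by (simp add: BEx_def)
lemma closedf_BEx[simp]: "closedf k (BEx t \<phi>) = (closedt k t \<and> closedf (Suc k) \<phi>)"
  by (simp add: BEx_def)
lemma delta0_BEx[intro]: "delta0 \<phi> \<Longrightarrow> delta0 (BEx t \<phi>)"
  by (auto simp: BEx_def intro: delta0.intros)
definition PE :: "trm \<Rightarrow> trm \<Rightarrow> trm \<Rightarrow> fm" where
  "PE x y z = Eq (Plus z z) (Plus (Times (Plus x y) (S (Plus x y))) (Plus x x))"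

lemma triangle_twice: "2 * triangle n = n * Suc n"
  by (induction n) (auto simp: algebra_simps)

lemma evalf_PE[simp]: "evalf e (PE x y z) = (evalt e z = prod_encode (evalt e x, evalt e y))"
proof -
  have "\<And>a b c::nat. (c + c = (a + b) * Suc (a + b) + (a + a)) = (c = triangle (a + b) + a)"
    using triangle_twice by (metis mult_2 add_mult_distrib2 mult_cancel_left zero_neq_numeral)
  then show ?thesis by (simp add: PE_def prod_encode_def)
qed
lemma substf_PE[simp]: "substf k u (PE x y z) = PE (substt k u x) (substt k u y) (substt k u z)"
  by (simp add: PE_def)
lemma closedf_PE[simp]: "closedf k (PE x y z) = (closedt k x \<and> closedt k y \<and> closedt k z)"
  by (auto simp: PE_def)
lemma delta0_PE[intro]: "delta0 (PE x y z)"
  by (auto simp: PE_def intro: delta0.intros)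

definition beta :: "nat \<Rightarrow> nat \<Rightarrow> nat \<Rightarrow> nat" where
  "beta a b i = a mod Suc (Suc i * b)"

definition Beta :: "trm \<Rightarrow> trm \<Rightarrow> trm \<Rightarrow> trm \<Rightarrow> fm" where
  "Beta A B I R = BEx A (And (Eq (liftt 0 A) (Plus (Times (Var 0) (S (Times (S (liftt 0 I)) (liftt 0 B)))) (liftt 0 R)))
      (BEx (S (Times (S (liftt 0 I)) (liftt 0 B)))
         (Eq (Plus (Var 0) (S (liftt 0 (liftt 0 R)))) (liftt 0 (S (Times (S (liftt 0 I)) (liftt 0 B)))))))"

lemma beta_char: "0 < (m::nat) \<Longrightarrow> (\<exists>q\<le>a. a = q * m + r \<and> (\<exists>d\<le>m. d + Suc r = m)) = (r = a mod m)"
proof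
  assume "0 < m" "\<exists>q\<le>a. a = q * m + r \<and> (\<exists>d\<le>m. d + Suc r = m)"
  then show "r = a mod m" by (metis add_Suc_right less_add_Suc2 mod_mult_self3 mod_less)
next
  assume m: "0 < m" "r = a mod m"
  have "a div m \<le> a" by (simp add: div_le_dividend)
  moreover have "a = a div m * m + r" using m by simp
  moreover have "r < m" using m by simp
  then have "m - Suc r \<le> m \<and> m - Suc r + Suc r = m" by simp
  ultimately show "\<exists>q\<le>a. a = q * m + r \<and> (\<exists>d\<le>m. d + Suc r = m)" by blast
qed

lemma evalf_Beta[simp]: "evalf e (Beta A B I R) = (evalt e R = beta (evalt e A) (evalt e B) (evalt e I))"
  using beta_char[of "Suc (Suc (evalt e I) * evalt e B)" "evalt e A" "evalt e R"]
  by (simp add: Beta_def beta_def)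
lemma substf_Beta[simp]: "substf k u (Beta A B I R) = Beta (substt k u A) (substt k u B) (substt k u I) (substt k u R)"
  by (simp add: Beta_def substt_liftt_comm)
lemma closedf_Beta[simp]: "closedf k (Beta A B I R) = (closedt k A \<and> closedt k B \<and> closedt k I \<and> closedt k R)"
  by (auto simp: Beta_def)
lemma delta0_Beta[intro]: "delta0 (Beta A B I R)"
  by (auto simp: Beta_def intro: delta0.intros)

abbreviation L :: "trm \<Rightarrow> trm" where "L t \<equiv> liftt 0 t"

definition Body :: "trm \<Rightarrow> trm \<Rightarrow> fm" where
  "Body Z Y = And (Beta (Var 6) (Var 5) Zero (num 2))
     (And (BAll Y (Or (Eq (Var 0) (L Y))
            (BEx (Var 7) (BEx (Var 8) (And (Beta (Var 9) (Var 8) (Var 2) (Var 1))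
                 (And (Beta (Var 9) (Var 8) (S (Var 2)) (Var 0)) (PE (num 2) (Var 1) (Var 0))))))))
     (And (Beta (Var 6) (Var 5) Y (Var 4))
     (And (PE Zero (Var 4) (Var 3))
     (And (PE Zero (Var 3) (Var 2))
     (And (PE (Var 2) Y (Var 1))
     (And (PE (num 2) (Var 1) (Var 0))
          (PE (num 3) (Var 0) Z)))))))"

definition deltaR :: "trm \<Rightarrow> trm \<Rightarrow> trm \<Rightarrow> fm" where
  "deltaR W Z Y =
    BEx W (BEx (L W) (BEx (L (L W)) (BEx (L (L (L W))) (BEx (L (L (L (L W))))
      (BEx (L (L (L (L (L W))))) (BEx (L (L (L (L (L (L W))))))
        (Body (L (L (L (L (L (L (L Z))))))) (L (L (L (L (L (L (L Y))))))))))))))"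

definition deltaF :: "trm \<Rightarrow> trm \<Rightarrow> trm \<Rightarrow> fm" where
  "deltaF W Z Y = And (Le Z W) (deltaR W Z Y)"

definition DeltaR :: "nat \<Rightarrow> nat \<Rightarrow> nat \<Rightarrow> bool" where
  "DeltaR w z y = ((\<exists>a\<le>w. \<exists>b\<le>w. \<exists>cy\<le>w. \<exists>t1\<le>w. \<exists>t2\<le>w. \<exists>p1\<le>w. \<exists>p2\<le>w.
     beta a b 0 = 2 \<and>
     (\<forall>i\<le>y. i = y \<or> (\<exists>r1\<le>a. \<exists>r2\<le>a. r1 = beta a b i \<and> r2 = beta a b (Suc i) \<and> r2 = prod_encode (2, r1))) \<and>
     cy = beta a b y \<and> t1 = prod_encode (0, cy) \<and> t2 = prod_encode (0, t1) \<and>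
     p1 = prod_encode (t2, y) \<and> p2 = prod_encode (2, p1) \<and> z = prod_encode (3, p2)))"

definition DeltaS :: "nat \<Rightarrow> nat \<Rightarrow> nat \<Rightarrow> bool" where
  "DeltaS w z y = (z \<le> w \<and> DeltaR w z y)"

lemma evalf_deltaR[simp]: "evalf e (deltaR W Z Y) = DeltaR (evalt e W) (evalt e Z) (evalt e Y)"
  unfolding deltaR_def Body_def DeltaR_def by simp

lemma evalf_deltaF[simp]: "evalf e (deltaF W Z Y) = DeltaS (evalt e W) (evalt e Z) (evalt e Y)"
  unfolding deltaF_def DeltaS_def by simp


lemma substf_deltaR[simp]: "substf k u (deltaR W Z Y) = deltaR (substt k u W) (substt k u Z) (substt k u Y)"
  unfolding deltaR_def Body_def by (simp add: substt_liftt_comm)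

lemma closedf_deltaR[simp]: "closedt k W \<Longrightarrow> closedt k Z \<Longrightarrow> closedt k Y \<Longrightarrow> closedf k (deltaR W Z Y)"
  unfolding deltaR_def Body_def by simp

lemma delta0_deltaR[intro]: "delta0 (deltaR W Z Y)"
  unfolding deltaR_def Body_def by (auto intro!: delta0.intros delta0_BEx delta0_And delta0_Or)

lemma substf_deltaF[simp]: "substf k u (deltaF W Z Y) = deltaF (substt k u W) (substt k u Z) (substt k u Y)"
  unfolding deltaF_def by simp

lemma closedf_deltaF[simp]: "closedt k W \<Longrightarrow> closedt k Z \<Longrightarrow> closedt k Y \<Longrightarrow> closedf k (deltaF W Z Y)"
  unfolding deltaF_def by simp


definition gfun :: "nat \<Rightarrow> nat" where
  "gfun y = prod_encode (3, prod_encode (2, prod_encode (prod_encode (0, prod_encode (0, code_trm (num y))), y)))"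

lemma code_num_Suc: "code_trm (num (Suc i)) = prod_encode (2, code_trm (num i))" by simp
lemma code_num_0: "code_trm (num 0) = 2" by (simp add: prod_encode_def triangle_def)

lemma DeltaR_fun: assumes "DeltaR w z y" shows "z = gfun y"
proof -
  obtain a b where ab0: "beta a b 0 = 2"
    and st: "\<forall>i\<le>y. i = y \<or> (\<exists>r1\<le>a. \<exists>r2\<le>a. r1 = beta a b i \<and> r2 = beta a b (Suc i) \<and> r2 = prod_encode (2, r1))"
    and abz: "z = prod_encode (3, prod_encode (2, prod_encode (prod_encode (0, prod_encode (0, beta a b y)), y)))"
    using assms unfolding DeltaR_def by auto
  have ab: "beta a b 0 = 2"
    "\<forall>i\<le>y. i = y \<or> beta a b (Suc i) = prod_encode (2, beta a b i)"
    "z = prod_encode (3, prod_encode (2, prod_encode (prod_encode (0, prod_encode (0, beta a b y)), y)))"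
    using ab0 st abz by auto
  have "\<forall>i\<le>y. beta a b i = code_trm (num i)"
  proof (intro allI impI)
    fix i assume "i \<le> y"
    then show "beta a b i = code_trm (num i)"
    proof (induction i)
      case 0 then show ?case using ab(1) code_num_0 by simp
    next
      case (Suc i)
      then have "i \<le> y" "i \<noteq> y" by auto
      then have "beta a b (Suc i) = prod_encode (2, beta a b i)" using ab(2) by blast
      then show ?case using Suc by simp
    qed
  qed
  then show ?thesis using ab(3) by (simp add: gfun_def)
qed

lemma DeltaS_fun: "DeltaS w z y \<Longrightarrow> z = gfun y"
  using DeltaR_fun DeltaS_def by blast

lemma coprime_moduli:
  assumes "i < j" "j < M" shows "coprime (Suc (Suc i * fact M)) (Suc (Suc j * fact M) :: nat)"
proof -
  let ?b = "fact M :: nat"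
  let ?d = "gcd (Suc (Suc i * ?b)) (Suc (Suc j * ?b))"
  have d1: "?d dvd Suc (Suc i * ?b)" and d2: "?d dvd Suc (Suc j * ?b)" by auto
  have m1: "?d dvd Suc j * Suc (Suc i * ?b)" using d1 by (rule dvd_mult)
  have m2: "?d dvd Suc i * Suc (Suc j * ?b)" using d2 by (rule dvd_mult)
  have eq: "Suc j * Suc (Suc i * ?b) = Suc i * Suc (Suc j * ?b) + (j - i)"
    using assms by (simp add: algebra_simps)
  have "?d dvd Suc i * Suc (Suc j * ?b) + (j - i)" using m1 unfolding eq .
  then have "?d dvd (j - i)" using dvd_add_right_iff[OF m2] by simp
  moreover have "j - i > 0" using assms by simp
  ultimately have "?d \<le> j - i" by (simp add: dvd_imp_le)
  moreover have "?d \<ge> 1" by (simp add: Suc_leI)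
  ultimately have "?d dvd ?b" using assms by (intro dvd_fact) auto
  then have "?d dvd Suc i * ?b" by simp
  moreover have "Suc (Suc i * ?b) = Suc i * ?b + 1" by simp
  ultimately have "?d dvd 1" using d1 dvd_add_right_iff by metis
  then show ?thesis by (simp add: coprime_iff_gcd_eq_1)
qed


lemma beta_exists: "\<exists>a b. \<forall>i\<le>y. beta a b i = s i"
proof -
  define M where "M = Suc (y + Max (s ` {..y}))"
  define b where "b = (fact M :: nat)"
  have sM: "s i < M" if "i \<le> y" for i
  proof -
    have "s i \<le> Max (s ` {..y})" using that by (intro Max_ge) auto
    then show ?thesis by (simp add: M_def)
  qed
  have yM: "y < M" by (simp add: M_def)
  have "b \<ge> M" unfolding b_def by (rule fact_ge_self)
  have cop: "\<forall>i\<in>{..y}. \<forall>j\<in>{..y}. i \<noteq> j \<longrightarrow> coprime (Suc (Suc i * b)) (Suc (Suc j * b))"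
  proof (intro ballI impI)
    fix i j assume ij: "i \<in> {..y}" "j \<in> {..y}" "i \<noteq> j"
    show "coprime (Suc (Suc i * b)) (Suc (Suc j * b))"
    proof (cases "i < j")
      case True then show ?thesis using coprime_moduli[of i j M] ij yM b_def by auto
    next
      case False then have "j < i" using ij by auto
      then show ?thesis using coprime_moduli[of j i M] ij yM b_def by (auto simp: coprime_commute)
    qed
  qed
  obtain a where a: "\<forall>i\<in>{..y}. [a = s i] (mod (Suc (Suc i * b)))"
    using chinese_remainder_nat[OF _ cop] by auto
  have "\<forall>i\<le>y. beta a b i = s i"
  proof (intro allI impI)
    fix i assume i: "i \<le> y"
    have "s i < M" using sM i by auto
    also have "M \<le> b" by fact
    also have "b < Suc (Suc i * b)" by simp
    finally have "s i < Suc (Suc i * b)" .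
    then show "beta a b i = s i" using a i unfolding beta_def cong_def by auto
  qed
  then show ?thesis by blast
qed

lemma DeltaR_intro:
  assumes "a \<le> w" "b \<le> w" "cy \<le> w" "t1 \<le> w" "t2 \<le> w" "p1 \<le> w" "p2 \<le> w"
    "beta a b 0 = 2"
    "\<forall>i\<le>y. i = y \<or> (\<exists>r1\<le>a. \<exists>r2\<le>a. r1 = beta a b i \<and> r2 = beta a b (Suc i) \<and> r2 = prod_encode (2, r1))"
    "cy = beta a b y" "t1 = prod_encode (0, cy)" "t2 = prod_encode (0, t1)"
    "p1 = prod_encode (t2, y)" "p2 = prod_encode (2, p1)" "z = prod_encode (3, p2)"
  shows "DeltaR w z y"
  unfolding DeltaR_def
  apply (rule exI[of _ a], rule conjI, rule assms)
  apply (rule exI[of _ b], rule conjI, rule assms)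
  apply (rule exI[of _ cy], rule conjI, rule assms)
  apply (rule exI[of _ t1], rule conjI, rule assms)
  apply (rule exI[of _ t2], rule conjI, rule assms)
  apply (rule exI[of _ p1], rule conjI, rule assms)
  apply (rule exI[of _ p2], rule conjI, rule assms)
  using assms(8-) by simp

lemma DeltaS_exists: "\<exists>w. DeltaS w (gfun y) y"
proof -
  obtain a b where ab: "\<forall>i\<le>y. beta a b i = code_trm (num i)" using beta_exists[of y "\<lambda>i. code_trm (num i)"] by blast
  define cy where "cy = beta a b y"
  define t1 where "t1 = prod_encode (0, cy)"
  define t2 where "t2 = prod_encode (0, t1)"
  define p1 where "p1 = prod_encode (t2, y)"
  define p2 where "p2 = prod_encode (2, p1)"
  define z where "z = prod_encode (3, p2)"
  define w where "w = a + b + cy + t1 + t2 + p1 + p2 + z + beta a b 0"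
  have z: "z = gfun y" using ab by (simp add: z_def p2_def p1_def t2_def t1_def cy_def gfun_def)
  have step: "\<forall>i\<le>y. i = y \<or> (\<exists>r1\<le>a. \<exists>r2\<le>a. r1 = beta a b i \<and> r2 = beta a b (Suc i) \<and> r2 = prod_encode (2, r1))"
  proof (intro allI impI)
    fix i assume i: "i \<le> y"
    show "i = y \<or> (\<exists>r1\<le>a. \<exists>r2\<le>a. r1 = beta a b i \<and> r2 = beta a b (Suc i) \<and> r2 = prod_encode (2, r1))"
    proof (cases "i = y")
      case False
      then have "Suc i \<le> y" using i by simp
      then have "beta a b (Suc i) = prod_encode (2, beta a b i)" using ab i by simp
      moreover have "beta a b i \<le> a" "beta a b (Suc i) \<le> a" by (auto simp: beta_def)
      ultimately show ?thesis by blast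
    qed simp
  qed
  have "beta a b 0 = code_trm (num 0)" using ab by blast
  then have b0: "beta a b 0 = 2" using code_num_0 by simp
  have "DeltaR w z y"
  proof (rule DeltaR_intro[OF _ _ _ _ _ _ _ b0 step])
    show "a \<le> w" "b \<le> w" "cy \<le> w" "t1 \<le> w" "t2 \<le> w" "p1 \<le> w" "p2 \<le> w"
      unfolding w_def by simp_all
  qed (simp_all only: cy_def t1_def t2_def p1_def p2_def z_def)
  moreover have "z \<le> w" by (simp add: w_def)
  ultimately have "DeltaS w z y" unfolding DeltaS_def by simp
  then show ?thesis using z by blast
qed


definition MinF :: "trm \<Rightarrow> trm \<Rightarrow> trm \<Rightarrow> fm" where
  "MinF W Z Y = BAll W (BAll (Var 0) (Imp (deltaR (Var 1) (Var 0) (L (L Y))) (Eq (Var 0) (L (L Z)))))"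

definition DF :: "trm \<Rightarrow> trm \<Rightarrow> fm" where
  "DF Z Y = Ex (And (deltaF (Var 0) (L Z) (L Y)) (MinF (Var 0) (L Z) (L Y)))"

lemma substf_MinF[simp]: "substf k u (MinF W Z Y) = MinF (substt k u W) (substt k u Z) (substt k u Y)"
  by (simp add: MinF_def substt_liftt_comm)
lemma substf_DF[simp]: "substf k u (DF Z Y) = DF (substt k u Z) (substt k u Y)"
  by (simp add: DF_def substt_liftt_comm)
lemma closedf_MinF[simp]: "closedt k W \<Longrightarrow> closedt k Z \<Longrightarrow> closedt k Y \<Longrightarrow> closedf k (MinF W Z Y)"
  by (simp add: MinF_def)
lemma closedf_DF[simp]: "closedt k Z \<Longrightarrow> closedt k Y \<Longrightarrow> closedf k (DF Z Y)"
  by (simp add: DF_def)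
lemma delta0_MinF: "delta0 (MinF W Z Y)"
  by (auto simp: MinF_def intro!: delta0.intros)
lemma evalf_MinF[simp]: "evalf e (MinF W Z Y) =
   (\<forall>w'\<le>evalt e W. \<forall>z'\<le>w'. DeltaR w' z' (evalt e Y) \<longrightarrow> z' = evalt e Z)"
  by (simp add: MinF_def)

lemma substf_BigOr[simp]: "substf k u (BigOr xs) = BigOr (map (substf k u) xs)"
  by (induction xs) (auto simp: BigOr_def)

context Rth begin

lemma rep1: "prv T (DF (num (gfun k)) (num k))"
proof -
  let ?N = "gfun k"
  obtain m where m: "DeltaS m ?N k" using DeltaS_exists by blast
  have Nm: "?N \<le> m" and dr: "DeltaR m ?N k" using m by (auto simp: DeltaS_def)
  have 1: "prv T (Le (num ?N) (num m))" using le_num Nm by simp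
  have 2: "prv T (deltaR (num m) (num ?N) (num k))"
    by (rule delta0_true[where e="\<lambda>_. 0"]) (use dr in auto)
  have 3: "prv T (MinF (num m) (num ?N) (num k))"
    by (rule delta0_true[where e="\<lambda>_. 0"]) (auto simp: delta0_MinF dest: DeltaR_fun)
  have "prv T (And (deltaF (num m) (num ?N) (num k)) (MinF (num m) (num ?N) (num k)))"
    unfolding deltaF_def by (rule tMP3[OF 1 2 3]) auto
  then have "prv T (substf 0 (num m) (And (deltaF (Var 0) (num ?N) (num k)) (MinF (Var 0) (num ?N) (num k))))"
    by simp
  then have "prv T (Ex (And (deltaF (Var 0) (num ?N) (num k)) (MinF (Var 0) (num ?N) (num k))))"
    by (rule ExI')
  then show ?thesis by (simp add: DF_def)
qed

lemma caseA:
  assumes m: "DeltaS m (gfun k) k"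
  shows "prv T (Imp (Le (num m) (Var 0)) (Imp (MinF (Var 0) (Var 1) (num k)) (Eq (Var 1) (num (gfun k)))))"
proof -
  let ?N = "gfun k"
  have Nm: "?N \<le> m" and dr: "DeltaR m ?N k" using m by (auto simp: DeltaS_def)
  let ?X = "BAll (Var 0) (Imp (deltaR (Var 1) (Var 0) (num k)) (Eq (Var 0) (Var 3)))"
  have "prv T (Imp (All (Imp (Le (Var 0) (Var 1)) ?X)) (substf 0 (num m) (Imp (Le (Var 0) (Var 1)) ?X)))"
    by (rule prv.AllE)
  then have a1: "prv T (Imp (MinF (Var 0) (Var 1) (num k))
      (Imp (Le (num m) (Var 0)) (BAll (num m) (Imp (deltaR (num m) (Var 0) (num k)) (Eq (Var 0) (Var 2))))))"
    by (simp add: MinF_def BAll_def numeral_3_eq_3 numeral_2_eq_2)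
  let ?Y = "Imp (Le (Var 0) (num m)) (Imp (deltaR (num m) (Var 0) (num k)) (Eq (Var 0) (Var 2)))"
  have "prv T (Imp (All ?Y) (substf 0 (num ?N) ?Y))"
    by (rule prv.AllE)
  then have a2: "prv T (Imp (BAll (num m) (Imp (deltaR (num m) (Var 0) (num k)) (Eq (Var 0) (Var 2))))
      (Imp (Le (num ?N) (num m)) (Imp (deltaR (num m) (num ?N) (num k)) (Eq (num ?N) (Var 1)))))"
    by (simp add: BAll_def)
  have 1: "prv T (Le (num ?N) (num m))" using le_num Nm by simp
  have 2: "prv T (deltaR (num m) (num ?N) (num k))"
    by (rule delta0_true[where e="\<lambda>_. 0"]) (use dr in auto)
  have 3: "prv T (Imp (Eq (num ?N) (Var 1)) (Eq (Var 1) (num ?N)))" by (rule eq_sym)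
  have "prv T (Imp (BAll (num m) (Imp (deltaR (num m) (Var 0) (num k)) (Eq (Var 0) (Var 2)))) (Eq (Var 1) (num ?N)))"
    by (rule tMP4[OF a2 1 2 3]) auto
  then show ?thesis by (rule tMP2[OF a1]) auto
qed

lemma caseB_inner:
  assumes "j \<le> m"
  shows "prv T (Imp (And (Le (Var 1) (num j)) (deltaR (num j) (Var 1) (num k))) (Eq (Var 1) (num (gfun k))))"
proof -
  let ?N = "gfun k"
  let ?psi = "Imp (deltaR (num j) (Var 1) (num k)) (Eq (Var 1) (num ?N))"
  have "prv T (substf 0 (Var 1) (Imp (Le (Var 0) (num j)) (BigOr (map (\<lambda>i. Eq (Var 0) (num i)) [0..<Suc j]))))"
    by (rule AllE'[OF ax_le])
  then have b1: "prv T (Imp (Le (Var 1) (num j)) (BigOr (map (\<lambda>i. Eq (Var 1) (num i)) [0..<Suc j])))"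
    by (simp add: o_def)
  have b2: "prv T (Imp (BigOr (map (\<lambda>i. Eq (Var 1) (num i)) [0..<Suc j])) ?psi)"
  proof (rule BigOr_elim, safe)
    fix x assume "x \<in> set (map (\<lambda>i. Eq (Var 1) (num i)) [0..<Suc j])"
    then obtain i where i: "i \<le> j" "x = Eq (Var 1) (num i)" by (force simp del: upt_Suc simp add: less_Suc_eq_le)
    show "prv T (Imp x ?psi)"
    proof (cases "DeltaR j i k")
      case True
      then have "i = ?N" using DeltaR_fun by blast
      then show ?thesis unfolding i(2) by (intro taut) auto
    next
      case False
      then have n: "prv T (Neg (deltaR (num j) (num i) (num k)))"
        by (intro delta0_false[where e="\<lambda>_. 0"]) auto
      have "prv T (Imp (Eq (Var 1) (num i)) (Imp (substf 0 (Var 1) (deltaR (num j) (Var 0) (num k)))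
               (substf 0 (num i) (deltaR (num j) (Var 0) (num k)))))"
        by (rule prv.EqSub)
      then have e: "prv T (Imp (Eq (Var 1) (num i)) (Imp (deltaR (num j) (Var 1) (num k)) (deltaR (num j) (num i) (num k))))"
        by simp
      show ?thesis unfolding i(2) by (rule tMP2[OF e n]) auto
    qed
  qed
  show ?thesis by (rule tMP2[OF b1 b2]) auto
qed

lemma caseB:
  assumes m: "DeltaS m (gfun k) k"
  shows "prv T (Imp (Le (Var 0) (num m)) (Imp (deltaF (Var 0) (Var 1) (num k)) (Eq (Var 1) (num (gfun k)))))"
proof -
  let ?N = "gfun k"
  let ?G = "Imp (deltaF (Var 0) (Var 1) (num k)) (Eq (Var 1) (num ?N))"
  have b1: "prv T (Imp (Le (Var 0) (num m)) (BigOr (map (\<lambda>i. Eq (Var 0) (num i)) [0..<Suc m])))"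
    by (rule AllE_var[OF ax_le]) simp
  have b2: "prv T (Imp (BigOr (map (\<lambda>i. Eq (Var 0) (num i)) [0..<Suc m])) ?G)"
  proof (rule BigOr_elim, safe)
    fix x assume "x \<in> set (map (\<lambda>i. Eq (Var 0) (num i)) [0..<Suc m])"
    then obtain j where j: "j \<le> m" "x = Eq (Var 0) (num j)" by (force simp del: upt_Suc simp add: less_Suc_eq_le)
    have "prv T (Imp (Eq (Var 0) (num j)) (Imp (substf 0 (Var 0) (deltaF (Var 0) (Var 2) (num k)))
             (substf 0 (num j) (deltaF (Var 0) (Var 2) (num k)))))"
      by (rule prv.EqSub)
    then have e: "prv T (Imp (Eq (Var 0) (num j)) (Imp (deltaF (Var 0) (Var 1) (num k)) (deltaF (num j) (Var 1) (num k))))"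
      by simp
    have c: "prv T (Imp (deltaF (num j) (Var 1) (num k)) (Eq (Var 1) (num ?N)))"
      using caseB_inner[OF j(1)] by (simp add: deltaF_def)
    show "prv T (Imp x ?G)" unfolding j(2) by (rule tMP2[OF e c]) auto
  qed
  show ?thesis by (rule tMP2[OF b1 b2]) auto
qed

lemma rep2: "prv T (Imp (DF (Var 0) (num k)) (Eq (Var 0) (num (gfun k))))"
proof -
  let ?N = "gfun k"
  obtain m where m: "DeltaS m ?N k" using DeltaS_exists by blast
  have t: "prv T (Or (Le (Var 0) (num m)) (Le (num m) (Var 0)))"
    by (rule AllE_var[OF ax_tri]) simp
  have "prv T (Imp (And (deltaF (Var 0) (Var 1) (num k)) (MinF (Var 0) (Var 1) (num k))) (Eq (Var 1) (num ?N)))"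
    by (rule tMP3[OF t caseA[OF m] caseB[OF m]]) auto
  then have "prv T (Imp (And (deltaF (Var 0) (Var 1) (num k)) (MinF (Var 0) (Var 1) (num k))) (liftf 0 (Eq (Var 0) (num ?N))))"
    by simp
  then have "prv T (Imp (Ex (And (deltaF (Var 0) (Var 1) (num k)) (MinF (Var 0) (Var 1) (num k)))) (Eq (Var 0) (num ?N)))"
    by (rule ExE')
  then show ?thesis by (simp add: DF_def)
qed

lemma code_theta: "code_fm (All (Imp (Eq (Var 0) (num K)) G)) = gfun K" if "K = code_fm G"
  using that by (simp add: gfun_def prod_encode_def)

lemma diag:
  assumes chi: "closedf 1 \<chi>"
  shows "\<exists>\<theta>. closedf 0 \<theta> \<and> prv T (Iff \<theta> (substf 0 (quote \<theta>) \<chi>))"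
proof -
  define G where "G = Ex (And (DF (Var 0) (Var 1)) \<chi>)"
  define K where "K = code_fm G"
  define \<theta> where "\<theta> = All (Imp (Eq (Var 0) (num K)) G)"
  define N where "N = gfun K"
  have cG: "closedf 1 G" unfolding G_def using closedf_mono[OF chi] by simp
  have cth: "closedf 0 \<theta>" unfolding \<theta>_def using cG by simp
  have q: "quote \<theta> = num N" unfolding quote_def N_def \<theta>_def using code_theta K_def by simp
  have chiK: "substf 1 (num K) \<chi> = \<chi>" using substf_closed[OF chi] by simp
  define GK where "GK = Ex (And (DF (Var 0) (num K)) \<chi>)"
  have GK: "substf 0 (num K) G = GK" unfolding G_def GK_def using chiK by simp
  have cGK: "closedf 0 GK" unfolding GK_def using closedf_mono[OF chi] by simp
  define chiN where "chiN = substf 0 (num N) \<chi>"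
  have cchiN: "closedf 0 chiN" unfolding chiN_def using closedf_substf[of 0 \<chi> 0 "num N"] chi by simp
  have "prv T (Imp \<theta> (substf 0 (num K) (Imp (Eq (Var 0) (num K)) G)))"
    unfolding \<theta>_def by (rule prv.AllE)
  then have i1: "prv T (Imp \<theta> (Imp (Eq (num K) (num K)) GK))" using GK by simp
  have "prv T (Imp (Eq (Var 0) (num K)) (Imp (substf 0 (num K) G) G))" by (rule eq_var_subst[OF cG])
  then have e: "prv T (Imp (Eq (Var 0) (num K)) (Imp GK G))" using GK by simp
  have "prv T (Imp GK (Imp (Eq (Var 0) (num K)) G))" by (rule tMP[OF e]) auto
  then have i2: "prv T (Imp GK \<theta>)" unfolding \<theta>_def using cGK by (rule AllI_closed)
  have I1: "prv T (Iff \<theta> GK)" by (rule tMP3[OF i1 prv.Refl i2]) auto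
  have r2: "prv T (Imp (DF (Var 0) (num K)) (Eq (Var 0) (num N)))" unfolding N_def by (rule rep2)
  have "prv T (Imp (Eq (Var 0) (num N)) (Imp (substf 0 (Var 0) \<chi>) (substf 0 (num N) \<chi>)))"
    by (rule prv.EqSub)
  then have es: "prv T (Imp (Eq (Var 0) (num N)) (Imp \<chi> chiN))"
    unfolding chiN_def using substf_var_id[of 0 \<chi>] chi by simp
  have "prv T (Imp (And (DF (Var 0) (num K)) \<chi>) chiN)" by (rule tMP2[OF r2 es]) auto
  then have j1: "prv T (Imp GK chiN)" unfolding GK_def using cchiN by (rule ExE_closed)
  have r1: "prv T (DF (num N) (num K))" unfolding N_def by (rule rep1)
  have "prv T (Imp (substf 0 (num N) (And (DF (Var 0) (num K)) \<chi>)) GK)" unfolding GK_def by (rule ExI)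
  then have "prv T (Imp (And (DF (num N) (num K)) chiN) GK)" unfolding chiN_def by simp
  then have j2: "prv T (Imp chiN GK)" by (rule tMP2[OF _ r1]) auto
  have "prv T (Iff \<theta> chiN)" by (rule tMP3[OF I1 j1 j2]) auto
  then show ?thesis using cth q chiN_def by auto
qed

end


theorem mainTheorem3:
  fixes U :: "fm set"
  assumes "\<forall>\<psi>\<in>U. sentence \<psi>"
    and "\<forall>\<psi>\<in>R_axioms. prv U \<psi>"
    and "consistent U"
  shows "\<not> (\<exists>\<rho>. closedf 1 \<rho>
     \<and> (\<forall>\<phi>. sentence \<phi> \<and> consistent (insert \<phi> U) \<longrightarrow>
           consistent (insert (inst \<rho> \<phi>) (insert \<phi> U))
         \<and> consistent (insert (Neg (inst \<rho> \<phi>)) (insert \<phi> U)))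
     \<and> (\<forall>\<phi> \<psi>. sentence \<phi> \<and> sentence \<psi> \<and> prv U (Iff \<phi> \<psi>) \<longrightarrow>
           prv U (Iff (inst \<rho> \<phi>) (inst \<rho> \<psi>))))"
proof
  assume "\<exists>\<rho>. closedf 1 \<rho>
     \<and> (\<forall>\<phi>. sentence \<phi> \<and> consistent (insert \<phi> U) \<longrightarrow>
           consistent (insert (inst \<rho> \<phi>) (insert \<phi> U))
         \<and> consistent (insert (Neg (inst \<rho> \<phi>)) (insert \<phi> U)))
     \<and> (\<forall>\<phi> \<psi>. sentence \<phi> \<and> sentence \<psi> \<and> prv U (Iff \<phi> \<psi>) \<longrightarrow>
           prv U (Iff (inst \<rho> \<phi>) (inst \<rho> \<psi>)))"
  then obtain \<rho> where cr: "closedf 1 \<rho>"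
    and ind: "\<And>\<phi>. sentence \<phi> \<Longrightarrow> consistent (insert \<phi> U) \<Longrightarrow>
           consistent (insert (inst \<rho> \<phi>) (insert \<phi> U))
         \<and> consistent (insert (Neg (inst \<rho> \<phi>)) (insert \<phi> U))"
    and ext: "\<And>\<phi> \<psi>. sentence \<phi> \<Longrightarrow> sentence \<psi> \<Longrightarrow> prv U (Iff \<phi> \<psi>) \<Longrightarrow>
           prv U (Iff (inst \<rho> \<phi>) (inst \<rho> \<psi>))"
    by blast
  interpret Rth U using assms(2) by unfold_locales
  have sBot: "sentence Bot" by (simp add: sentence_def)
  have cnr: "closedf 1 (Neg \<rho>)" using cr by simp
  obtain \<theta>1 where c1: "closedf 0 \<theta>1" and d1: "prv U (Iff \<theta>1 (Neg (inst \<rho> \<theta>1)))"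
    using diag[OF cnr] unfolding inst_def by auto
  have "\<not> consistent (insert \<theta>1 U)"
  proof
    assume "consistent (insert \<theta>1 U)"
    then have cons: "consistent (insert (inst \<rho> \<theta>1) (insert \<theta>1 U))" using ind c1 sentence_def by blast
    let ?H = "insert (inst \<rho> \<theta>1) (insert \<theta>1 U)"
    have "prv ?H (Iff \<theta>1 (Neg (inst \<rho> \<theta>1)))" using d1 by (rule prv_mono) auto
    moreover have "prv ?H \<theta>1" by (rule prv.Ax) simp
    moreover have "prv ?H (inst \<rho> \<theta>1)" by (rule prv.Ax) simp
    ultimately have "prv ?H Bot" by (rule tMP3) auto
    then show False using cons unfolding consistent_def by blast
  qed
  then have n1: "prv U (Neg \<theta>1)" using Neg_of_inconsistent c1 by blast
  have r1: "prv U (inst \<rho> \<theta>1)" by (rule tMP2[OF d1 n1]) auto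
  have "prv U (Iff \<theta>1 Bot)" by (rule tMP[OF n1]) auto
  then have "prv U (Iff (inst \<rho> \<theta>1) (inst \<rho> Bot))" using ext c1 sBot sentence_def by blast
  then have A: "prv U (inst \<rho> Bot)" by (rule tMP2[OF _ r1]) auto
  obtain \<theta>2 where c2: "closedf 0 \<theta>2" and d2: "prv U (Iff \<theta>2 (inst \<rho> \<theta>2))"
    using diag[OF cr] unfolding inst_def by auto
  have "\<not> consistent (insert \<theta>2 U)"
  proof
    assume "consistent (insert \<theta>2 U)"
    then have cons: "consistent (insert (Neg (inst \<rho> \<theta>2)) (insert \<theta>2 U))" using ind c2 sentence_def by blast
    let ?H = "insert (Neg (inst \<rho> \<theta>2)) (insert \<theta>2 U)"
    have "prv ?H (Iff \<theta>2 (inst \<rho> \<theta>2))" using d2 by (rule prv_mono) auto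
    moreover have "prv ?H \<theta>2" by (rule prv.Ax) simp
    moreover have "prv ?H (Neg (inst \<rho> \<theta>2))" by (rule prv.Ax) simp
    ultimately have "prv ?H Bot" by (rule tMP3) auto
    then show False using cons unfolding consistent_def by blast
  qed
  then have n2: "prv U (Neg \<theta>2)" using Neg_of_inconsistent c2 by blast
  have r2: "prv U (Neg (inst \<rho> \<theta>2))" by (rule tMP2[OF d2 n2]) auto
  have "prv U (Iff \<theta>2 Bot)" by (rule tMP[OF n2]) auto
  then have "prv U (Iff (inst \<rho> \<theta>2) (inst \<rho> Bot))" using ext c2 sBot sentence_def by blast
  then have B: "prv U (Neg (inst \<rho> Bot))" by (rule tMP2[OF _ r2]) auto
  have "prv U Bot" by (rule tMP2[OF A B]) auto
  then show False using assms(3) unfolding consistent_def by blast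
qed


end
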